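(* Let $L$ be a finite-dimensional completely solvable Lie algebra over any field $F$. Then $\mathrm{nil}(L)\subseteq N(L)$.
   Context: $L$ is completely solvable if $L^2=[L,L]$ is nilpotent. $N(L)$ is the nilradical (largest nilpotent ideal) of $L$. $\langle a,b\rangle$ denotes the Lie subalgebra generated by $a,b$, and $\mathrm{nil}(L)=\{x\in L\mid \langle h,x\rangle \text{ is nilpotent for all } h\in L\}$. *)

theory Defs
  imports Complex_Main
begin

definition lie_algebra :: "('f::field \<Rightarrow> 'v::ab_group_add \<Rightarrow> 'v) \<Rightarrow> ('v \<Rightarrow> 'v \<Rightarrow> 'v) \<Rightarrow> bool" where
  "lie_algebra s br \<longleftrightarrow> vector_space s
     \<and> (\<forall>x. Vector_Spaces.linear s s (br x))
     \<and> (\<forall>y. Vector_Spaces.linear s s (\<lambda>x. br x y))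
     \<and> (\<forall>x. br x x = 0)
     \<and> (\<forall>x y z. br x (br y z) + br y (br z x) + br z (br x y) = 0)"

definition fin_dim :: "('f::field \<Rightarrow> 'v::ab_group_add \<Rightarrow> 'v) \<Rightarrow> bool" where
  "fin_dim s \<longleftrightarrow> (\<exists>B. finite B \<and> module.span s B = UNIV)"

definition lie_bracket_set :: "('f::field \<Rightarrow> 'v::ab_group_add \<Rightarrow> 'v) \<Rightarrow> ('v \<Rightarrow> 'v \<Rightarrow> 'v) \<Rightarrow> 'v set \<Rightarrow> 'v set \<Rightarrow> 'v set" where
  "lie_bracket_set s br A B = module.span s {br a b | a b. a \<in> A \<and> b \<in> B}"

definition lie_subalgebra :: "('f::field \<Rightarrow> 'v::ab_group_add \<Rightarrow> 'v) \<Rightarrow> ('v \<Rightarrow> 'v \<Rightarrow> 'v) \<Rightarrow> 'v set \<Rightarrow> bool" where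
  "lie_subalgebra s br S \<longleftrightarrow> module.subspace s S \<and> (\<forall>x\<in>S. \<forall>y\<in>S. br x y \<in> S)"

definition lie_ideal :: "('f::field \<Rightarrow> 'v::ab_group_add \<Rightarrow> 'v) \<Rightarrow> ('v \<Rightarrow> 'v \<Rightarrow> 'v) \<Rightarrow> 'v set \<Rightarrow> bool" where
  "lie_ideal s br I \<longleftrightarrow> module.subspace s I \<and> (\<forall>x. \<forall>y\<in>I. br x y \<in> I)"

fun lower_central :: "('f::field \<Rightarrow> 'v::ab_group_add \<Rightarrow> 'v) \<Rightarrow> ('v \<Rightarrow> 'v \<Rightarrow> 'v) \<Rightarrow> 'v set \<Rightarrow> nat \<Rightarrow> 'v set" where
  "lower_central s br S 0 = S"
| "lower_central s br S (Suc k) = lie_bracket_set s br S (lower_central s br S k)"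

definition lie_nilpotent :: "('f::field \<Rightarrow> 'v::ab_group_add \<Rightarrow> 'v) \<Rightarrow> ('v \<Rightarrow> 'v \<Rightarrow> 'v) \<Rightarrow> 'v set \<Rightarrow> bool" where
  "lie_nilpotent s br S \<longleftrightarrow> (\<exists>k. lower_central s br S k = {0})"

definition completely_solvable :: "('f::field \<Rightarrow> 'v::ab_group_add \<Rightarrow> 'v) \<Rightarrow> ('v \<Rightarrow> 'v \<Rightarrow> 'v) \<Rightarrow> bool" where
  "completely_solvable s br \<longleftrightarrow> lie_nilpotent s br (lie_bracket_set s br UNIV UNIV)"

definition nilradical :: "('f::field \<Rightarrow> 'v::ab_group_add \<Rightarrow> 'v) \<Rightarrow> ('v \<Rightarrow> 'v \<Rightarrow> 'v) \<Rightarrow> 'v set" where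
  "nilradical s br = (THE N. lie_ideal s br N \<and> lie_nilpotent s br N
      \<and> (\<forall>J. lie_ideal s br J \<and> lie_nilpotent s br J \<longrightarrow> J \<subseteq> N))"

definition lie_generated :: "('f::field \<Rightarrow> 'v::ab_group_add \<Rightarrow> 'v) \<Rightarrow> ('v \<Rightarrow> 'v \<Rightarrow> 'v) \<Rightarrow> 'v set \<Rightarrow> 'v set" where
  "lie_generated s br A = \<Inter>{S. lie_subalgebra s br S \<and> A \<subseteq> S}"

definition nil_set :: "('f::field \<Rightarrow> 'v::ab_group_add \<Rightarrow> 'v) \<Rightarrow> ('v \<Rightarrow> 'v \<Rightarrow> 'v) \<Rightarrow> 'v set" where
  "nil_set s br = {x. \<forall>h. lie_nilpotent s br (lie_generated s br {h, x})}"

end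

theory Submission
  imports Defs
begin

locale lie_alg = vector_space s for s :: "'f::field \<Rightarrow> 'v::ab_group_add \<Rightarrow> 'v" +
  fixes br :: "'v \<Rightarrow> 'v \<Rightarrow> 'v"
  assumes addR: "br x (y + z) = br x y + br x z"
    and scaleR: "br x (s c y) = s c (br x y)"
    and addL: "br (y + z) x = br y x + br z x"
    and scaleL: "br (s c y) x = s c (br y x)"
    and alt: "br x x = 0"
    and jac: "br x (br y z) + br y (br z x) + br z (br x y) = 0"
begin

lemma zeroR[simp]: "br x 0 = 0"
  using addR[of x 0 0] by simp

lemma zeroL[simp]: "br 0 x = 0"
  using addL[of 0 0 x] by simp

lemma anti: "br x y = - br y x"
proof -
  have "br (x + y) (x + y) = 0" by (rule alt)
  moreover have "br (x + y) (x + y) = br x x + br x y + (br y x + br y y)"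
    by (simp add: addL addR add.assoc)
  ultimately have "br x y + br y x = 0" by (simp add: alt)
  then show ?thesis by (simp add: eq_neg_iff_add_eq_0)
qed

lemma br_span_right:
  assumes "b \<in> span B" "\<And>b. b \<in> B \<Longrightarrow> br a b \<in> T" "subspace T"
  shows "br a b \<in> T"
proof -
  have "subspace (Collect (\<lambda>b. br a b \<in> T))"
    using assms(3) unfolding subspace_def by (auto simp: addR scaleR)
  then show ?thesis using span_induct[OF assms(1), of "\<lambda>b. br a b \<in> T"] assms(2) by auto
qed

lemma bs_sub:
  assumes "\<And>a b. a \<in> A \<Longrightarrow> b \<in> B \<Longrightarrow> br a b \<in> T" "subspace T"
  shows "lie_bracket_set s br A B \<subseteq> T"
  unfolding lie_bracket_set_def using assms by (intro span_minimal) auto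

lemma bs_in:
  assumes "a \<in> A" "b \<in> B"
  shows "br a b \<in> lie_bracket_set s br A B"
  unfolding lie_bracket_set_def using assms by (intro span_base) auto

lemma lc_zero: "subspace S \<Longrightarrow> 0 \<in> lower_central s br S k"
  by (cases k) (auto simp: lie_bracket_set_def span_zero subspace_def)

lemma chain_nilpotent:
  assumes S: "subspace S" and U: "\<And>t. subspace (U t)" and U0: "S \<subseteq> U 0"
    and step: "\<And>y t z. y \<in> S \<Longrightarrow> z \<in> U t \<Longrightarrow> br y z \<in> U (Suc t)"
    and UT: "U T = {0}"
  shows "lie_nilpotent s br S"
proof -
  have "lower_central s br S k \<subseteq> U k" for k
  proof (induct k)
    case 0 then show ?case using U0 by simp
  next
    case (Suc k) then show ?case
      by (simp, intro bs_sub U) (auto intro: step)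
  qed
  then have "lower_central s br S T = {0}" using UT lc_zero[OF S, of T] by auto
  then show ?thesis unfolding lie_nilpotent_def by blast
qed

lemma sub_neg: "subspace T \<Longrightarrow> x \<in> T \<Longrightarrow> - x \<in> T"
  by (metis subspace_neg)

lemma lc_ideal:
  assumes J: "lie_ideal s br J"
  shows "lie_ideal s br (lower_central s br J k)"
proof (induct k)
  case 0 then show ?case using J by simp
next
  case (Suc k)
  let ?C = "lower_central s br J k"
  let ?D = "lower_central s br J (Suc k)"
  have Ck: "subspace ?C" "\<And>x y. y \<in> ?C \<Longrightarrow> br x y \<in> ?C"
    using Suc unfolding lie_ideal_def by auto
  have Jd: "subspace J" "\<And>x y. y \<in> J \<Longrightarrow> br x y \<in> J"
    using J unfolding lie_ideal_def by auto
  have D: "subspace ?D" by (simp add: lie_bracket_set_def)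
  have "br x y \<in> ?D" if y: "y \<in> ?D" for x y
  proof -
    have "br x g \<in> ?D" if g: "g \<in> {br a b | a b. a \<in> J \<and> b \<in> ?C}" for g
    proof -
      obtain a b where ab: "g = br a b" "a \<in> J" "b \<in> ?C" using g by blast
      have e: "br x (br a b) = - (br a (br b x) + br b (br x a))"
        using jac[of x a b] by (metis add.assoc eq_neg_iff_add_eq_0)
      have 1: "br a (br b x) \<in> ?D"
        using Ck(2)[OF ab(3), of x] anti[of b x] ab(2) bs_in[of a J "- br x b" ?C]
          sub_neg[OF Ck(1)] by simp
      have 2: "br b (br x a) \<in> ?D"
        using anti[of b "br x a"] bs_in[OF Jd(2)[OF ab(2)] ab(3), of x] sub_neg[OF D]
        by force
      show ?thesis unfolding ab(1) e using 1 2 D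
        by (intro sub_neg subspace_add) auto
    qed
    then show ?thesis
      using br_span_right[of y "{br a b | a b. a \<in> J \<and> b \<in> ?C}" x ?D] D y
      by (simp add: lie_bracket_set_def)
  qed
  then show ?case using D unfolding lie_ideal_def by blast
qed

lemma lc_Suc_sub:
  assumes J: "lie_ideal s br J"
  shows "lower_central s br J (Suc k) \<subseteq> lower_central s br J k"
  using lc_ideal[OF J, of k] unfolding lie_ideal_def
  by (simp, intro bs_sub) auto

lemma lc_antimono:
  assumes J: "lie_ideal s br J" and "k \<le> k'"
  shows "lower_central s br J k' \<subseteq> lower_central s br J k"
  using assms(2)
proof (induct k' rule: dec_induct)
  case base then show ?case by simp
next
  case (step n) then show ?case using lc_Suc_sub[OF J, of n] by blast
qed

definition Jp :: "'v set \<Rightarrow> nat \<Rightarrow> 'v set" where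
  "Jp J a = (case a of 0 \<Rightarrow> UNIV | Suc b \<Rightarrow> lower_central s br J b)"

lemma Jp_ideal: "lie_ideal s br J \<Longrightarrow> lie_ideal s br (Jp J a)"
proof (cases a)
  case 0 then show ?thesis by (simp add: Jp_def lie_ideal_def)
next
  case (Suc b) assume "lie_ideal s br J"
  then show ?thesis using lc_ideal[of J b] Suc by (simp add: Jp_def)
qed

lemma Jp_step:
  assumes J: "lie_ideal s br J" and y: "y \<in> J" and z: "z \<in> Jp J a"
  shows "br y z \<in> Jp J (Suc a)"
proof (cases a)
  case 0
  then show ?thesis using J y anti[of y z] sub_neg[of J "br z y"]
    unfolding lie_ideal_def by (auto simp: Jp_def)
next
  case (Suc b)
  then show ?thesis using z y by (simp add: Jp_def bs_in)
qed

lemma Jp_zero: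
  assumes J: "lie_ideal s br J" and c: "lower_central s br J c = {0}" and "c < a"
  shows "Jp J a = {0}"
proof -
  obtain b where b: "a = Suc b" "c \<le> b" using assms(3) by (cases a) auto
  have "subspace J" using J unfolding lie_ideal_def by auto
  then show ?thesis using lc_antimono[OF J b(2)] c lc_zero[of J b] b(1)
    by (auto simp: Jp_def)
qed

lemma Jp_ideal_mem: "lie_ideal s br J \<Longrightarrow> z \<in> Jp J a \<Longrightarrow> br x z \<in> Jp J a"
  using Jp_ideal unfolding lie_ideal_def by blast


lemma ideal_sum:
  assumes I: "lie_ideal s br I" and J: "lie_ideal s br J"
  shows "lie_ideal s br {x + y | x y. x \<in> I \<and> y \<in> J}"
proof -
  have sI: "subspace I" "\<And>x y. y \<in> I \<Longrightarrow> br x y \<in> I"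
    and sJ: "subspace J" "\<And>x y. y \<in> J \<Longrightarrow> br x y \<in> J"
    using I J unfolding lie_ideal_def by auto
  have "br x (a + b) \<in> {x + y | x y. x \<in> I \<and> y \<in> J}" if "a \<in> I" "b \<in> J" for x a b
    using sI(2)[OF that(1)] sJ(2)[OF that(2)] by (auto simp: addR)
  then show ?thesis unfolding lie_ideal_def using subspace_sums[OF sI(1) sJ(1)] by auto
qed

lemma nil_sum:
  assumes I: "lie_ideal s br I" "lie_nilpotent s br I"
    and J: "lie_ideal s br J" "lie_nilpotent s br J"
  shows "lie_nilpotent s br {x + y | x y. x \<in> I \<and> y \<in> J}"
proof -
  obtain ci where ci: "lower_central s br I ci = {0}" using I(2) unfolding lie_nilpotent_def by blast
  obtain cj where cj: "lower_central s br J cj = {0}" using J(2) unfolding lie_nilpotent_def by blast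
  define U where "U t = span (\<Union>{Jp I a \<inter> Jp J b | a b. t \<le> a + b})" for t
  have sI: "subspace I" and sJ: "subspace J" using I J unfolding lie_ideal_def by auto
  show ?thesis
  proof (rule chain_nilpotent[where U = U and T = "ci + cj + 1"])
    show "subspace {x + y | x y. x \<in> I \<and> y \<in> J}" using subspace_sums[OF sI sJ] .
    show "subspace (U t)" for t unfolding U_def by simp
    have "Jp I 0 \<inter> Jp J 0 \<subseteq> U 0" unfolding U_def by (rule subset_trans[OF _ span_superset]) blast
    then have "UNIV \<subseteq> U 0" by (simp add: Jp_def)
    then show "{x + y | x y. x \<in> I \<and> y \<in> J} \<subseteq> U 0" by (rule subset_trans[OF subset_UNIV])
    show "br y z \<in> U (Suc t)" if y: "y \<in> {x + y | x y. x \<in> I \<and> y \<in> J}" and z: "z \<in> U t" for y z t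
    proof -
      obtain i j where ij: "y = i + j" "i \<in> I" "j \<in> J" using y by blast
      have 1: "br i z \<in> U (Suc t)"
      proof (rule br_span_right[OF z[unfolded U_def]])
        show "subspace (U (Suc t))" unfolding U_def by simp
        fix g assume "g \<in> \<Union>{Jp I a \<inter> Jp J b | a b. t \<le> a + b}"
        then obtain a b where g: "g \<in> Jp I a" "g \<in> Jp J b" "t \<le> a + b" by blast
        have "br i g \<in> Jp I (Suc a) \<inter> Jp J b"
          using Jp_step[OF I(1) ij(2) g(1)] Jp_ideal_mem[OF J(1) g(2)] by blast
        moreover have "Suc t \<le> Suc a + b" using g(3) by simp
        ultimately show "br i g \<in> U (Suc t)" unfolding U_def
          by (intro span_base UnionI[of "Jp I (Suc a) \<inter> Jp J (b)"]) blast+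
      qed
      have 2: "br j z \<in> U (Suc t)"
      proof (rule br_span_right[OF z[unfolded U_def]])
        show "subspace (U (Suc t))" unfolding U_def by simp
        fix g assume "g \<in> \<Union>{Jp I a \<inter> Jp J b | a b. t \<le> a + b}"
        then obtain a b where g: "g \<in> Jp I a" "g \<in> Jp J b" "t \<le> a + b" by blast
        have "br j g \<in> Jp I a \<inter> Jp J (Suc b)"
          using Jp_step[OF J(1) ij(3) g(2)] Jp_ideal_mem[OF I(1) g(1)] by blast
        moreover have "Suc t \<le> a + Suc b" using g(3) by simp
        ultimately show "br j g \<in> U (Suc t)" unfolding U_def
          by (intro span_base UnionI[of "Jp I (a) \<inter> Jp J (Suc b)"]) blast+
      qed
      show ?thesis unfolding ij(1) addL using 1 2 unfolding U_def by (rule span_add)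
    qed
    have "\<Union>{Jp I a \<inter> Jp J b | a b. ci + cj + 1 \<le> a + b} \<subseteq> {0}"
    proof
      fix g assume "g \<in> \<Union>{Jp I a \<inter> Jp J b | a b. ci + cj + 1 \<le> a + b}"
      then obtain a b where g: "g \<in> Jp I a" "g \<in> Jp J b" "ci + cj + 1 \<le> a + b" by blast
      have "ci < a \<or> cj < b" using g(3) by arith
      then show "g \<in> {0}" using Jp_zero[OF I(1) ci, of a] Jp_zero[OF J(1) cj, of b] g by blast
    qed
    then have "U (ci + cj + 1) \<subseteq> {0}" unfolding U_def using span_mono[of _ "{0}"] by simp
    then show "U (ci + cj + 1) = {0}" unfolding U_def using span_zero by blast
  qed
qed


end

locale fd_lie = lie_alg s br + finite_dimensional_vector_space s Bs
  for s :: "'f::field \<Rightarrow> 'v::ab_group_add \<Rightarrow> 'v" and br and Bs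
begin

lemma nilrad_exists:
  "\<exists>N. lie_ideal s br N \<and> lie_nilpotent s br N \<and>
     (\<forall>J. lie_ideal s br J \<and> lie_nilpotent s br J \<longrightarrow> J \<subseteq> N)"
proof -
  let ?P = "\<lambda>J. lie_ideal s br J \<and> lie_nilpotent s br J"
  have "subspace {0}" by (simp add: subspace_def)
  then have P0: "?P {0}" unfolding lie_ideal_def lie_nilpotent_def
    by (auto intro: exI[of _ 0])
  have "\<forall>y. ?P y \<longrightarrow> dim y < Suc dimension" using dim_subset_UNIV by (simp add: le_imp_less_Suc)
  then obtain N where N: "?P N" and mx: "\<And>y. ?P y \<Longrightarrow> dim y \<le> dim N"
    using ex_has_greatest_nat[of ?P "{0}" dim "Suc dimension", OF P0] by blast
  have "J \<subseteq> N" if J: "?P J" for J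
  proof -
    let ?S = "{x + y | x y. x \<in> J \<and> y \<in> N}"
    have PS: "?P ?S" using ideal_sum nil_sum J N by blast
    have sJ: "subspace J" and sN: "subspace N" using J N unfolding lie_ideal_def by auto
    have "0 \<in> J" "0 \<in> N" using sJ sN subspace_0 by blast+
    then have NS: "N \<subseteq> ?S" and JS: "J \<subseteq> ?S" by force+
    have "N = ?S" using subspace_dim_equal[OF sN subspace_sums[OF sJ sN] NS mx[OF PS]] .
    then show ?thesis using JS by simp
  qed
  then show ?thesis using N by blast
qed

lemma nilradical_eq:
  assumes "lie_ideal s br N" "lie_nilpotent s br N"
    "\<forall>J. lie_ideal s br J \<and> lie_nilpotent s br J \<longrightarrow> J \<subseteq> N"
  shows "nilradical s br = N"
  unfolding nilradical_def
  by (rule the_equality) (use assms in blast, use assms in blast)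

lemma pow0[simp]: "(br x ^^ r) 0 = 0"
  by (induct r) auto

lemma pow_add: "(br x ^^ r) (a + b) = (br x ^^ r) a + (br x ^^ r) b"
  by (induct r) (auto simp: addR)

lemma pow_scale: "(br x ^^ r) (s c a) = s c ((br x ^^ r) a)"
  by (induct r) (auto simp: scaleR)

lemma pow_big: "(\<forall>z. (br x ^^ m) z = 0) \<Longrightarrow> m \<le> r \<Longrightarrow> (br x ^^ r) z = 0"
  using funpow_add[of "r - m" m "br x"] by simp

lemma ad_nil:
  assumes x: "x \<in> nil_set s br"
  shows "\<exists>m. \<forall>z. (br x ^^ m) z = 0"
proof -
  have "\<exists>k. (br x ^^ k) h = 0" for h
  proof -
    let ?S = "lie_generated s br {h, x}"
    have hx: "h \<in> ?S" "x \<in> ?S" unfolding lie_generated_def by auto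
    obtain k where k: "lower_central s br ?S k = {0}"
      using x unfolding nil_set_def lie_nilpotent_def by blast
    have "(br x ^^ k) h \<in> lower_central s br ?S k" for k
      by (induct k) (auto simp: hx intro: bs_in)
    then show ?thesis using k by blast
  qed
  then obtain f where f: "\<And>h. (br x ^^ f h) h = 0" by metis
  define m where "m = (\<Sum>b\<in>Bs. f b)"
  have "b \<in> {z. (br x ^^ m) z = 0}" if b: "b \<in> Bs" for b
  proof -
    have "f b \<le> m" unfolding m_def using b finite_Basis by (intro member_le_sum) auto
    then have "m = (m - f b) + f b" by simp
    then show ?thesis using funpow_add[of "m - f b" "f b" "br x"] f[of b]
      by (metis comp_apply mem_Collect_eq pow0)
  qed
  moreover have "subspace {z. (br x ^^ m) z = 0}"
    unfolding subspace_def by (auto simp: pow_add pow_scale)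
  ultimately have "span Bs \<subseteq> {z. (br x ^^ m) z = 0}" by (intro span_minimal) auto
  then show ?thesis using span_Basis by auto
qed

lemma pow_in_ideal: "lie_ideal s br K \<Longrightarrow> z \<in> K \<Longrightarrow> (br x ^^ r) z \<in> K"
  by (induct r) (auto simp: lie_ideal_def)

lemma main:
  assumes cs: "completely_solvable s br" and x: "x \<in> nil_set s br"
  shows "x \<in> nilradical s br"
proof -
  obtain N where N: "lie_ideal s br N" "lie_nilpotent s br N"
    "\<forall>J. lie_ideal s br J \<and> lie_nilpotent s br J \<longrightarrow> J \<subseteq> N"
    using nilrad_exists by blast
  have NR: "nilradical s br = N" using nilradical_eq[OF N] .
  let ?L2 = "lie_bracket_set s br UNIV UNIV"
  have "lie_ideal s br ?L2" unfolding lie_ideal_def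
    using bs_in[of _ UNIV _ UNIV] by (simp add: lie_bracket_set_def)
  then have L2N: "?L2 \<subseteq> N" using N(3) cs unfolding completely_solvable_def by blast
  have brN: "br a b \<in> N" for a b using L2N bs_in[of a UNIV b UNIV] by blast
  have sN: "subspace N" and iN: "\<And>a b. b \<in> N \<Longrightarrow> br a b \<in> N"
    using N(1) unfolding lie_ideal_def by auto
  obtain m where m: "\<forall>z. (br x ^^ m) z = 0" using ad_nil[OF x] by blast
  obtain c where c: "lower_central s br N c = {0}" using N(2) unfolding lie_nilpotent_def by blast
  let ?C = "lower_central s br N"
  have Cid: "lie_ideal s br (?C j)" for j using lc_ideal[OF N(1)] .
  define I where "I = {a + n | a n. a \<in> span {x} \<and> n \<in> N}"
  have sI: "subspace I" unfolding I_def by (rule subspace_sums) (auto simp: sN)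
  have iI: "lie_ideal s br I"
  proof -
    have "br y z \<in> I" if zI: "z \<in> I" for y z
    proof -
      obtain a n where "z = a + n" "n \<in> N" using zI unfolding I_def by blast
      then have "br y z \<in> N" using brN iN subspace_add[OF sN] by (simp add: addR)
      then have "0 + br y z \<in> I" unfolding I_def using span_zero[of "{x}"] by blast
      then show ?thesis by simp
    qed
    then show ?thesis using sI unfolding lie_ideal_def by blast
  qed
  define V where "V t = span {(br x ^^ r) z | r j z. z \<in> ?C j \<and> t \<le> j * m + r}" for t
  define U where "U t = (case t of 0 \<Rightarrow> UNIV | Suc t' \<Rightarrow> V t')" for t
  have nI: "lie_nilpotent s br I"
  proof (rule chain_nilpotent[where U = U and T = "Suc (c * m)"])
    show "subspace I" by (rule sI)
    show "subspace (U t)" for t by (cases t) (auto simp: U_def V_def)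
    show "I \<subseteq> U 0" by (simp add: U_def)
    show "br y z \<in> U (Suc t)" if y: "y \<in> I" and z: "z \<in> U t" for y z t
    proof (cases t)
      case 0
      have "br y z \<in> ?C 0" using brN by simp
      then have "br y z \<in> V 0" unfolding V_def
        by (intro span_base CollectI exI[of _ 0] exI[of _ "br y z"]) auto
      then show ?thesis using 0 by (simp add: U_def)
    next
      case (Suc t')
      then have z': "z \<in> V t'" using z by (simp add: U_def)
      obtain a n where yan: "y = a + n" "a \<in> span {x}" "n \<in> N" using y unfolding I_def by blast
      obtain k where k: "a = s k x" using yan(2) span_singleton by auto
      have sV: "subspace (V t)" unfolding V_def by simp
      have 1: "br x z \<in> V t"
      proof (rule br_span_right[OF z'[unfolded V_def] _ sV])
        fix g assume "g \<in> {(br x ^^ r) z | r j z. z \<in> ?C j \<and> t' \<le> j * m + r}"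
        then obtain r j z0 where g: "g = (br x ^^ r) z0" "z0 \<in> ?C j" "t' \<le> j * m + r" by blast
        have "br x g = (br x ^^ Suc r) z0" using g(1) by simp
        moreover have "t \<le> j * m + Suc r" using g(3) Suc by simp
        ultimately show "br x g \<in> V t" unfolding V_def
          by (intro span_base CollectI exI[of _ "Suc r"] exI[of _ j] exI[of _ z0]) (use g in auto)
      qed
      have 2: "br n z \<in> V t"
      proof (rule br_span_right[OF z'[unfolded V_def] _ sV])
        fix g assume "g \<in> {(br x ^^ r) z | r j z. z \<in> ?C j \<and> t' \<le> j * m + r}"
        then obtain r j z0 where g: "g = (br x ^^ r) z0" "z0 \<in> ?C j" "t' \<le> j * m + r" by blast
        show "br n g \<in> V t"
        proof (cases "m \<le> r")
          case True
          then have "g = 0" using g(1) pow_big[OF m] by simp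
          then show ?thesis by (simp add: span_zero V_def)
        next
          case False
          have "g \<in> ?C j" using g pow_in_ideal[OF Cid] by simp
          then have "br n g \<in> ?C (Suc j)" using yan(3) by (simp add: bs_in)
          moreover have "t \<le> Suc j * m + 0" using g(3) Suc False by simp
          ultimately show ?thesis unfolding V_def
            by (intro span_base CollectI exI[of _ 0] exI[of _ "Suc j"] exI[of _ "br n g"]) auto
        qed
      qed
      have "br y z = s k (br x z) + br n z" using yan(1) k by (simp add: addL scaleL)
      then have "br y z \<in> V t" using 1 2 sV by (simp add: subspace_add subspace_scale)
      then show ?thesis by (simp add: U_def)
    qed
    have "{(br x ^^ r) z | r j z. z \<in> ?C j \<and> c * m \<le> j * m + r} \<subseteq> {0}"
    proof
      fix g assume "g \<in> {(br x ^^ r) z | r j z. z \<in> ?C j \<and> c * m \<le> j * m + r}"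
      then obtain r j z0 where g: "g = (br x ^^ r) z0" "z0 \<in> ?C j" "c * m \<le> j * m + r" by blast
      show "g \<in> {0}"
      proof (cases "m \<le> r")
        case True then show ?thesis using g(1) pow_big[OF m] by simp
      next
        case False
        have "c \<le> j"
        proof (rule ccontr)
          assume "\<not> c \<le> j"
          then have "Suc j * m \<le> c * m" by (intro mult_le_mono1) simp
          then show False using g(3) False by simp
        qed
        then have "z0 = 0" using lc_antimono[OF N(1) \<open>c \<le> j\<close>] c g(2) by auto
        then show ?thesis using g(1) by simp
      qed
    qed
    then have "V (c * m) \<subseteq> {0}" unfolding V_def using span_mono[of _ "{0}"] by simp
    then show "U (Suc (c * m)) = {0}" unfolding U_def V_def using span_zero by auto
  qed
  have "I \<subseteq> N" using N(3) iI nI by blast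
  moreover have "x \<in> I" unfolding I_def
    by (intro CollectI exI[of _ x] exI[of _ 0]) (auto simp: sN subspace_0 span_base)
  ultimately show ?thesis using NR by auto
qed

end

theorem lemma3p5:
  fixes s :: "'f::field \<Rightarrow> 'v::ab_group_add \<Rightarrow> 'v" and br :: "'v \<Rightarrow> 'v \<Rightarrow> 'v"
  assumes "lie_algebra s br" and "fin_dim s" and "completely_solvable s br"
  shows "nil_set s br \<subseteq> nilradical s br"
proof -
  have vs: "vector_space s" using assms(1) unfolding lie_algebra_def by blast
  interpret lie_alg s br
    using assms(1) unfolding lie_algebra_def Vector_Spaces.linear_iff
    by unfold_locales (simp_all add: vs vector_space.vector_space_assms)
  obtain B where B: "finite B" "span B = UNIV" using assms(2) unfolding fin_dim_def by blast
  obtain B' where B': "B' \<subseteq> B" "independent B'" "B \<subseteq> span B'"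
    using maximal_independent_subset[of B] by blast
  have "span B' = UNIV" using B(2) B'(3) span_mono[OF B'(3)] span_span[of B'] by (simp add: top_le)
  then interpret fd_lie s br B'
    using B'(2) finite_subset[OF B'(1) B(1)] by unfold_locales auto
  show ?thesis using main[OF assms(3)] by blast
qed

end
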